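(* Let $(E,\|\cdot\|)$ be a normed space over $K$ and let $A$ be a local compactoid in $E$. If the linear span $[A]$ is infinite-dimensional, then $[A]$, with the norm restricted from $E$, is not a Banach space.
   Context: $K$ is a field complete with respect to a non-trivial non-archimedean absolute value, $B_K=\{x\in K:|x|\le1\}$; norms are non-archimedean. Absolutely convex = $B_K$-submodule; $[X]$ is the linear span of $X$. An absolutely convex $A\subseteq E$ is a local compactoid in $E$ if for every zero neighbourhood $U$ there is a finite $S\subseteq E$ with $A\subseteq U+[S]$. *)

theory Defs
  imports Complex_Main
begin

definition nonarch_abs :: "('k::field \<Rightarrow> real) \<Rightarrow> bool" where
  "nonarch_abs absK \<longleftrightarrow>
     (\<forall>x. 0 \<le> absK x) \<and> (\<forall>x. absK x = 0 \<longleftrightarrow> x = 0) \<and>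
     (\<forall>x y. absK (x * y) = absK x * absK y) \<and>
     (\<forall>x y. absK (x + y) \<le> max (absK x) (absK y))"

definition nontrivial_abs :: "('k::field \<Rightarrow> real) \<Rightarrow> bool" where
  "nontrivial_abs absK \<longleftrightarrow> (\<exists>x. x \<noteq> 0 \<and> absK x \<noteq> 1)"

definition complete_abs :: "('k::field \<Rightarrow> real) \<Rightarrow> bool" where
  "complete_abs absK \<longleftrightarrow>
     (\<forall>f::nat \<Rightarrow> 'k. (\<forall>e>0. \<exists>M. \<forall>m\<ge>M. \<forall>n\<ge>M. absK (f m - f n) < e)
        \<longrightarrow> (\<exists>l. \<forall>e>0. \<exists>M. \<forall>n\<ge>M. absK (f n - l) < e))"

definition nonarch_valued_field :: "('k::field \<Rightarrow> real) \<Rightarrow> bool" where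
  "nonarch_valued_field absK \<longleftrightarrow> nonarch_abs absK \<and> nontrivial_abs absK \<and> complete_abs absK"

definition nonarch_norm ::
  "('k::field \<Rightarrow> real) \<Rightarrow> ('k \<Rightarrow> 'e::ab_group_add \<Rightarrow> 'e) \<Rightarrow> ('e \<Rightarrow> real) \<Rightarrow> bool" where
  "nonarch_norm absK scale N \<longleftrightarrow>
     (\<forall>x. 0 \<le> N x) \<and> (\<forall>x. N x = 0 \<longleftrightarrow> x = 0) \<and>
     (\<forall>a x. N (scale a x) = absK a * N x) \<and>
     (\<forall>x y. N (x + y) \<le> max (N x) (N y))"

definition abs_convex ::
  "('k::field \<Rightarrow> real) \<Rightarrow> ('k \<Rightarrow> 'e::ab_group_add \<Rightarrow> 'e) \<Rightarrow> 'e set \<Rightarrow> bool" where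
  "abs_convex absK scale A \<longleftrightarrow>
     0 \<in> A \<and> (\<forall>x\<in>A. \<forall>y\<in>A. x + y \<in> A) \<and>
     (\<forall>a x. absK a \<le> 1 \<longrightarrow> x \<in> A \<longrightarrow> scale a x \<in> A)"

definition zero_nhd :: "('e::ab_group_add \<Rightarrow> real) \<Rightarrow> 'e set \<Rightarrow> bool" where
  "zero_nhd N U \<longleftrightarrow> (\<exists>e>0. {x. N x < e} \<subseteq> U)"

definition local_compactoid ::
  "('k::field \<Rightarrow> real) \<Rightarrow> ('k \<Rightarrow> 'e::ab_group_add \<Rightarrow> 'e) \<Rightarrow> ('e \<Rightarrow> real) \<Rightarrow> 'e set \<Rightarrow> bool" where
  "local_compactoid absK scale N A \<longleftrightarrow>
     abs_convex absK scale A \<and>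
     (\<forall>U. zero_nhd N U \<longrightarrow>
        (\<exists>S. finite S \<and> A \<subseteq> {u + s | u s. u \<in> U \<and> s \<in> module.span scale S}))"

definition infinite_dimensional :: "('k::field \<Rightarrow> 'e::ab_group_add \<Rightarrow> 'e) \<Rightarrow> 'e set \<Rightarrow> bool" where
  "infinite_dimensional scale V \<longleftrightarrow> \<not> (\<exists>S. finite S \<and> S \<subseteq> V \<and> module.span scale S = V)"

definition banach_subset :: "('e::ab_group_add \<Rightarrow> real) \<Rightarrow> 'e set \<Rightarrow> bool" where
  "banach_subset N V \<longleftrightarrow>
     (\<forall>f::nat \<Rightarrow> 'e. (\<forall>n. f n \<in> V) \<and> (\<forall>e>0. \<exists>M. \<forall>m\<ge>M. \<forall>n\<ge>M. N (f m - f n) < e)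
        \<longrightarrow> (\<exists>l\<in>V. \<forall>e>0. \<exists>M. \<forall>n\<ge>M. N (f n - l) < e))"

end

theory Submission
  imports Defs
begin

locale nv = vector_space scale
  for scale :: "'k::field \<Rightarrow> 'e::ab_group_add \<Rightarrow> 'e" +
  fixes absK :: "'k \<Rightarrow> real" and N :: "'e \<Rightarrow> real"
  assumes NA: "nonarch_abs absK" and NN: "nonarch_norm absK scale N" and CA: "complete_abs absK"
begin

lemma abs_nonneg: "0 \<le> absK x" using NA by (simp add: nonarch_abs_def)
lemma abs_zero_iff: "absK x = 0 \<longleftrightarrow> x = 0" using NA by (simp add: nonarch_abs_def)
lemma abs_mult: "absK (x * y) = absK x * absK y" using NA by (simp add: nonarch_abs_def)
lemma abs_ultra: "absK (x + y) \<le> max (absK x) (absK y)" using NA by (simp add: nonarch_abs_def)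
lemma abs_0[simp]: "absK 0 = 0" using abs_zero_iff by simp
lemma abs_pos: "x \<noteq> 0 \<Longrightarrow> 0 < absK x" using abs_nonneg abs_zero_iff by (metis less_eq_real_def)

lemma abs_one: "absK 1 = 1"
proof -
  have "absK 1 = absK 1 * absK 1" using abs_mult[of 1 1] by simp
  moreover have "absK 1 \<noteq> 0" using abs_zero_iff by simp
  ultimately show ?thesis by simp
qed

lemma abs_minus_one: "absK (-1) = 1"
proof -
  have "absK (-1) * absK (-1) = 1" using abs_mult[of "-1" "-1"] abs_one by simp
  then have "(absK (-1))^2 = 1" by (simp add: power2_eq_square)
  then show ?thesis using abs_nonneg[of "-1"] power2_eq_1_iff by fastforce
qed

lemma abs_minus: "absK (- x) = absK x"
  using abs_mult[of "-1" x] abs_minus_one by simp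

lemma abs_inverse: "absK (inverse x) = inverse (absK x)"
proof (cases "x = 0")
  case True then show ?thesis by (simp add: abs_zero_iff)
next
  case False
  have "absK (inverse x) * absK x = 1" using abs_mult[of "inverse x" x] False abs_one by simp
  then show ?thesis by (metis inverse_unique mult.commute)
qed

lemma abs_power: "absK (x ^ n) = absK x ^ n"
  by (induct n) (simp_all add: abs_one abs_mult)

lemma N_nonneg: "0 \<le> N x" using NN by (simp add: nonarch_norm_def)
lemma N_zero_iff: "N x = 0 \<longleftrightarrow> x = 0" using NN by (simp add: nonarch_norm_def)
lemma N_scale: "N (scale a x) = absK a * N x" using NN by (simp add: nonarch_norm_def)
lemma N_ultra: "N (x + y) \<le> max (N x) (N y)" using NN by (simp add: nonarch_norm_def)
lemma N_0[simp]: "N 0 = 0" using N_zero_iff by simp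
lemma N_minus: "N (- x) = N x"
  using N_scale[of "-1" x] abs_minus_one by simp
lemma N_commute: "N (x - y) = N (y - x)"
  using N_minus[of "x - y"] by simp
lemma N_ultra_diff: "N (x - z) \<le> max (N (x - y)) (N (y - z))"
  using N_ultra[of "x - y" "y - z"] by simp
lemma N_ultra_lt: "N x < e \<Longrightarrow> N y < e \<Longrightarrow> N (x + y) < e"
  using N_ultra[of x y] by simp
lemma N_diff_lt: "N (x - y) < e \<Longrightarrow> N (y - z) < e \<Longrightarrow> N (x - z) < e"
  using N_ultra_diff[of x z y] by simp


definition closedP :: "'e set \<Rightarrow> bool" where
  "closedP U \<longleftrightarrow> (\<forall>x. x \<notin> U \<longrightarrow> (\<exists>\<delta>>0. \<forall>u\<in>U. \<delta> \<le> N (x - u)))"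

lemma closedP_empty: "closedP (span {})"
  unfolding closedP_def
proof (intro allI impI)
  fix x :: 'e assume "x \<notin> span {}"
  then have "x \<noteq> 0" by simp
  then have "N x > 0" using N_nonneg N_zero_iff by (metis less_eq_real_def)
  then show "\<exists>\<delta>>0. \<forall>u\<in>span {}. \<delta> \<le> N (x - u)" by auto
qed

lemma scale_lb:
  assumes "\<forall>u\<in>span B. d \<le> N (a - u)" "b \<in> span B"
  shows "absK c * d \<le> N (scale c a - b)"
proof (cases "c = 0")
  case True then show ?thesis using N_nonneg by simp
next
  case False
  have eq: "scale c a - b = scale c (a - scale (inverse c) b)"
    using False by (simp add: scale_right_diff_distrib)
  have "d \<le> N (a - scale (inverse c) b)" using assms span_scale by blast
  then have "absK c * d \<le> absK c * N (a - scale (inverse c) b)"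
    using abs_nonneg by (simp add: mult_left_mono)
  then show ?thesis using eq N_scale by simp
qed

lemma inv_mono: "M \<le> n \<Longrightarrow> inverse (real (Suc n)) \<le> inverse (real (Suc M))"
  by (simp add: le_imp_inverse_le)

lemma closedP_insert:
  assumes "closedP (span B)"
  shows "closedP (span (insert a B))"
proof (cases "a \<in> span B")
  case True then show ?thesis using span_redundant assms by simp
next
  case False
  from assms False obtain da where da: "da > 0" "\<forall>u\<in>span B. da \<le> N (a - u)"
    unfolding closedP_def by blast
  show ?thesis unfolding closedP_def
  proof (intro allI impI)
    fix x assume x: "x \<notin> span (insert a B)"
    show "\<exists>\<delta>>0. \<forall>u\<in>span (insert a B). \<delta> \<le> N (x - u)"
    proof (rule ccontr)
      assume H: "\<not> ?thesis"
      have "\<exists>u. u \<in> span (insert a B) \<and> N (x - u) < inverse (real (Suc n))" for n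
      proof -
        have "inverse (real (Suc n)) > 0" by simp
        with H show ?thesis by (meson not_le)
      qed
      then obtain u where u: "\<And>n. u n \<in> span (insert a B)" "\<And>n. N (x - u n) < inverse (real (Suc n))"
        by metis
      have "\<forall>n. \<exists>k. u n - scale k a \<in> span B" using u(1) span_insert by blast
      then obtain c where c: "\<And>n. u n - scale (c n) a \<in> span B" by metis
      define b where "b n = u n - scale (c n) a" for n
      have bB: "b n \<in> span B" for n using c b_def by simp
      have cauchy: "\<forall>e>0. \<exists>M. \<forall>m\<ge>M. \<forall>n\<ge>M. absK (c m - c n) < e"
      proof (intro allI impI)
        fix e :: real assume e: "e > 0"
        obtain M where M: "inverse (real (Suc M)) < e * da"
          using reals_Archimedean e da by (metis mult_pos_pos)
        show "\<exists>M. \<forall>m\<ge>M. \<forall>n\<ge>M. absK (c m - c n) < e"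
        proof (intro exI allI impI)
          fix m n assume mn: "M \<le> m" "M \<le> n"
          have eq: "scale (c m - c n) a - (b n - b m) = u m - u n"
            by (simp add: b_def scale_left_diff_distrib)
          have "absK (c m - c n) * da \<le> N (u m - u n)"
            using scale_lb[OF da(2), of "b n - b m" "c m - c n"] eq span_diff bB by metis
          also have "N (u m - u n) < e * da"
          proof -
            have "N (u m - x) < e * da" using u(2)[of m] inv_mono[OF mn(1)] M N_commute[of "u m" x] by linarith
            moreover have "N (x - u n) < e * da" using u(2)[of n] inv_mono[OF mn(2)] M by linarith
            ultimately show ?thesis using N_diff_lt by blast
          qed
          finally show "absK (c m - c n) < e" using da by simp
        qed
      qed
      then obtain l where l: "\<forall>e>0. \<exists>M. \<forall>n\<ge>M. absK (c n - l) < e"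
        using CA unfolding complete_abs_def by blast
      have "x - scale l a \<notin> span B"
      proof
        assume "x - scale l a \<in> span B"
        then have "x \<in> span (insert a B)" using span_insert by blast
        with x show False by simp
      qed
      with assms obtain \<delta> where \<delta>: "\<delta> > 0" "\<forall>w\<in>span B. \<delta> \<le> N (x - scale l a - w)"
        unfolding closedP_def by blast
      have "\<delta> / (N a + 1) > 0" using \<delta> N_nonneg[of a] by simp
      then obtain M1 where M1: "\<forall>n\<ge>M1. absK (c n - l) < \<delta> / (N a + 1)" using l by blast
      obtain M2 where M2: "inverse (real (Suc M2)) < \<delta>" using reals_Archimedean \<delta> by blast
      define n where "n = max M1 M2"
      have eq: "x - scale l a - b n = (x - u n) + scale (c n - l) a"
        by (simp add: b_def algebra_simps)
      have 1: "N (x - u n) < \<delta>" using u(2)[of n] inv_mono[of M2 n] M2 n_def by linarith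
      have 2: "N (scale (c n - l) a) < \<delta>"
      proof -
        have a1: "absK (c n - l) < \<delta> / (N a + 1)" using M1 n_def by simp
        have "absK (c n - l) * N a \<le> absK (c n - l) * (N a + 1)"
          using abs_nonneg by (simp add: mult_left_mono)
        also have "\<dots> < \<delta> / (N a + 1) * (N a + 1)"
          using a1 N_nonneg[of a] by (intro mult_strict_right_mono) auto
        also have "\<dots> = \<delta>" using N_nonneg[of a] by (simp add: field_simps)
        finally show ?thesis using N_scale by simp
      qed
      have "N (x - scale l a - b n) < \<delta>" using eq 1 2 N_ultra_lt by metis
      with \<delta>(2) bB show False by (meson not_le)
    qed
  qed
qed

lemma closedP_union:
  assumes "finite S" "closedP (span B)"
  shows "closedP (span (B \<union> S))"
  using assms
proof (induction S rule: finite_induct)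
  case empty then show ?case by simp
next
  case (insert a S)
  then have "closedP (span (insert a (B \<union> S)))" using closedP_insert by blast
  then show ?case by simp
qed


lemma closedP_banach:
  assumes "banach_subset N V"
  shows "closedP V"
  unfolding closedP_def
proof (intro allI impI)
  fix x assume x: "x \<notin> V"
  show "\<exists>\<delta>>0. \<forall>u\<in>V. \<delta> \<le> N (x - u)"
  proof (rule ccontr)
    assume H: "\<not> ?thesis"
    have "\<exists>v. v \<in> V \<and> N (x - v) < inverse (real (Suc n))" for n
    proof -
      have "inverse (real (Suc n)) > 0" by simp
      with H show ?thesis by (meson not_le)
    qed
    then obtain v where v: "\<And>n. v n \<in> V" "\<And>n. N (x - v n) < inverse (real (Suc n))"
      by metis
    have "\<forall>e>0. \<exists>M. \<forall>m\<ge>M. \<forall>n\<ge>M. N (v m - v n) < e"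
    proof (intro allI impI)
      fix e :: real assume e: "e > 0"
      obtain M where M: "inverse (real (Suc M)) < e" using reals_Archimedean e by blast
      show "\<exists>M. \<forall>m\<ge>M. \<forall>n\<ge>M. N (v m - v n) < e"
      proof (intro exI allI impI)
        fix m n assume mn: "M \<le> m" "M \<le> n"
        have "N (v m - x) < e" using v(2)[of m] inv_mono[OF mn(1)] M N_commute[of "v m" x] by linarith
        moreover have "N (x - v n) < e" using v(2)[of n] inv_mono[OF mn(2)] M by linarith
        ultimately show "N (v m - v n) < e" using N_diff_lt by blast
      qed
    qed
    with assms v(1) obtain l where l: "l \<in> V" "\<forall>e>0. \<exists>M. \<forall>n\<ge>M. N (v n - l) < e"
      unfolding banach_subset_def by blast
    have "N (x - l) = 0"
    proof (rule ccontr)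
      assume ne: "N (x - l) \<noteq> 0"
      then have pos: "N (x - l) > 0" using N_nonneg by (metis less_eq_real_def)
      then obtain M1 where M1: "\<forall>n\<ge>M1. N (v n - l) < N (x - l)" using l(2) by blast
      obtain M2 where M2: "inverse (real (Suc M2)) < N (x - l)" using reals_Archimedean pos by blast
      define n where "n = max M1 M2"
      have "N (x - v n) < N (x - l)" using v(2)[of n] inv_mono[of M2 n] M2 n_def by linarith
      moreover have "N (v n - l) < N (x - l)" using M1 n_def by simp
      ultimately have "N (x - l) < N (x - l)" using N_diff_lt by blast
      then show False by simp
    qed
    then have "x = l" using N_zero_iff by simp
    with x l(1) show False by simp
  qed
qed

lemma final:
  assumes T: "T \<subseteq> span A" and r: "r > 0" and p: "0 < absK p" "absK p < 1"
    and cl: "closedP (span T)"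
    and H: "\<forall>x\<in>span A. N x < r \<longrightarrow> (\<exists>w\<in>span T. N (x - w) < absK p * r)"
  shows "span T = span A"
proof -
  have TA: "span T \<subseteq> span A" using T by (simp add: span_minimal)
  have pne: "p \<noteq> 0" using p by auto
  have it: "\<forall>x\<in>span A. N x < r \<longrightarrow> (\<exists>w\<in>span T. N (x - w) < absK p ^ n * r)" for n
  proof (induction n)
    case 0 then show ?case by (auto intro!: bexI[of _ 0] span_zero)
  next
    case (Suc n)
    show ?case
    proof (intro ballI impI)
      fix x assume x: "x \<in> span A" "N x < r"
      with Suc obtain w where w: "w \<in> span T" "N (x - w) < absK p ^ n * r" by blast
      define y where "y = scale (inverse (p ^ n)) (x - w)"
      have yA: "y \<in> span A" using x(1) w(1) TA y_def by (auto intro: span_scale span_diff)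
      have pn: "absK p ^ n > 0" using p by simp
      have "N y = inverse (absK p ^ n) * N (x - w)"
        using y_def N_scale abs_inverse abs_power by simp
      also have "\<dots> < inverse (absK p ^ n) * (absK p ^ n * r)"
        using w(2) pn by (intro mult_strict_left_mono) auto
      also have "\<dots> = r" using pn by (metis mult.assoc mult_1 less_irrefl left_inverse)
      finally have "N y < r" .
      with yA H obtain w' where w': "w' \<in> span T" "N (y - w') < absK p * r" by blast
      have xy: "scale (p ^ n) y = x - w" using y_def pne by simp
      have eq: "x - (w + scale (p ^ n) w') = scale (p ^ n) (y - w')"
        using xy by (simp add: scale_right_diff_distrib)
      have "N (x - (w + scale (p ^ n) w')) = absK p ^ n * N (y - w')"
        using eq N_scale abs_power by simp
      also have "\<dots> < absK p ^ n * (absK p * r)"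
        using w'(2) pn by (intro mult_strict_left_mono) auto
      also have "\<dots> = absK p ^ Suc n * r" by simp
      finally show "\<exists>w\<in>span T. N (x - w) < absK p ^ Suc n * r"
        using w(1) w'(1) by (intro bexI[of _ "w + scale (p ^ n) w'"]) (auto intro: span_add span_scale)
    qed
  qed
  have inB: "x \<in> span T" if x: "x \<in> span A" "N x < r" for x
  proof (rule ccontr)
    assume "x \<notin> span T"
    with cl obtain \<delta> where \<delta>: "\<delta> > 0" "\<forall>u\<in>span T. \<delta> \<le> N (x - u)"
      unfolding closedP_def by blast
    obtain n where n: "absK p ^ n < \<delta> / r" using real_arch_pow_inv[of "\<delta> / r" "absK p"] \<delta> r p by auto
    then have "absK p ^ n * r < \<delta>" using r by (simp add: field_simps)
    with it[of n] x obtain w where "w \<in> span T" "N (x - w) < \<delta>" by fastforce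
    with \<delta>(2) show False by (meson not_le)
  qed
  have "span A \<subseteq> span T"
  proof
    fix v assume v: "v \<in> span A"
    have pos: "r / (N v + 1) > 0" using r N_nonneg[of v] by simp
    obtain n where n: "absK p ^ n < r / (N v + 1)" using real_arch_pow_inv[OF pos p(2)] by blast
    have pn: "absK p ^ n \<ge> 0" using p by simp
    have "absK p ^ n * N v \<le> absK p ^ n * (N v + 1)" using pn by (simp add: mult_left_mono)
    also have "\<dots> < r" using n N_nonneg[of v] by (simp add: field_simps)
    finally have "N (scale (p ^ n) v) < r" using N_scale abs_power by simp
    moreover have "scale (p ^ n) v \<in> span A" using v by (simp add: span_scale)
    ultimately have "scale (p ^ n) v \<in> span T" using inB by blast
    then have "scale (inverse (p ^ n)) (scale (p ^ n) v) \<in> span T" by (rule span_scale)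
    then show "v \<in> span T" using pne by simp
  qed
  with TA show ?thesis by blast
qed


lemma transfer:
  assumes cV: "closedP (span A)" and X: "X \<subseteq> span A" and S: "finite S"
  shows "\<forall>T0 \<epsilon> \<delta>. finite T0 \<longrightarrow> T0 \<subseteq> span A \<longrightarrow> 0 < \<epsilon> \<longrightarrow> \<epsilon> < \<delta> \<longrightarrow>
     (\<forall>x\<in>X. \<exists>w\<in>span (S \<union> T0). N (x - w) < \<epsilon>) \<longrightarrow>
     (\<exists>T. finite T \<and> T \<subseteq> span A \<and> (\<forall>x\<in>X. \<exists>w\<in>span T. N (x - w) < \<delta>))"
  using S
proof (induction S rule: finite_induct)
  case empty
  show ?case
  proof (intro allI impI)
    fix T0 \<epsilon> \<delta> assume "finite T0" "T0 \<subseteq> span A" "0 < \<epsilon>" "\<epsilon> < (\<delta>::real)"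
      "\<forall>x\<in>X. \<exists>w\<in>span ({} \<union> T0). N (x - w) < \<epsilon>"
    then have "\<forall>x\<in>X. \<exists>w\<in>span T0. N (x - w) < \<delta>"
      by (metis Un_empty_left less_trans)
    then show "\<exists>T. finite T \<and> T \<subseteq> span A \<and> (\<forall>x\<in>X. \<exists>w\<in>span T. N (x - w) < \<delta>)"
      using \<open>finite T0\<close> \<open>T0 \<subseteq> span A\<close> by blast
  qed
next
  case (insert s S)
  note IH = insert.IH[rule_format]
  show ?case
  proof (intro allI impI)
    fix T0 \<epsilon> \<delta> assume T0: "finite T0" "T0 \<subseteq> span A" and e: "0 < \<epsilon>" "\<epsilon> < (\<delta>::real)"
      and cov: "\<forall>x\<in>X. \<exists>w\<in>span (insert s S \<union> T0). N (x - w) < \<epsilon>"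
    define U where "U = span (span A \<union> S)"
    have cU: "closedP U" using closedP_union[OF insert(1), of "span A"] cV span_span U_def by simp
    have AU: "span A \<subseteq> U" unfolding U_def by (meson Un_upper1 span_superset subset_trans)
    have SU: "span (S \<union> T0) \<subseteq> U"
      unfolding U_def using T0(2) by (intro span_minimal) (auto intro: span_base)
    have Udec: "\<exists>v w. v \<in> span A \<and> w \<in> span S \<and> u = v + w" if "u \<in> U" for u
      using that unfolding U_def span_Un span_span by blast
    show "\<exists>T. finite T \<and> T \<subseteq> span A \<and> (\<forall>x\<in>X. \<exists>w\<in>span T. N (x - w) < \<delta>)"
    proof (cases "s \<in> U")
      case True
      then obtain v w' where v: "v \<in> span A" "w' \<in> span S" "s = v + w'" using Udec by blast
      have sub: "span (insert s S \<union> T0) \<subseteq> span (S \<union> insert v T0)"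
      proof (rule span_minimal)
        have "v \<in> span (S \<union> insert v T0)" by (auto intro: span_base)
        moreover have "w' \<in> span (S \<union> insert v T0)" using v(2) span_mono[of S "S \<union> insert v T0"] by blast
        ultimately have "s \<in> span (S \<union> insert v T0)" using v(3) span_add by blast
        then show "insert s S \<union> T0 \<subseteq> span (S \<union> insert v T0)" by (auto intro: span_base)
      qed simp
      have "\<forall>x\<in>X. \<exists>w\<in>span (S \<union> insert v T0). N (x - w) < \<epsilon>" using cov sub by blast
      then show ?thesis using IH[of "insert v T0" \<epsilon> \<delta>] T0 v(1) e by auto
    next
      case False
      with cU obtain \<delta>0 where \<delta>0: "\<delta>0 > 0" "\<forall>u\<in>U. \<delta>0 \<le> N (s - u)"
        unfolding closedP_def by blast
      define D where "D = (\<lambda>u. N (s - u)) ` U"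
      define d where "d = Inf D"
      have U0: "0 \<in> U" unfolding U_def by (rule span_zero)
      have Dne: "D \<noteq> {}" using U0 D_def by blast
      have Dbdd: "bdd_below D" unfolding D_def using N_nonneg by (intro bdd_belowI[of _ 0]) auto
      have d_lb: "d \<le> N (s - u)" if "u \<in> U" for u
        unfolding d_def D_def using that Dbdd D_def by (intro cInf_lower) auto
      have "\<delta>0 \<le> d" unfolding d_def using Dne \<delta>0(2) D_def by (intro cInf_greatest) auto
      then have dpos: "d > 0" using \<delta>0 by simp
      define \<epsilon>1 where "\<epsilon>1 = (\<epsilon> + \<delta>) / 2"
      have e1: "\<epsilon> < \<epsilon>1" "\<epsilon>1 < \<delta>" using e \<epsilon>1_def by auto
      have "d < d * \<epsilon>1 / \<epsilon>" using dpos e e1 by (simp add: field_simps)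
      then have "Inf D < d * \<epsilon>1 / \<epsilon>" using d_def by simp
      then obtain t where t: "t \<in> D" "t < d * \<epsilon>1 / \<epsilon>" using cInf_lessD[OF Dne] by blast
      then obtain u0 where u0: "u0 \<in> U" "N (s - u0) < d * \<epsilon>1 / \<epsilon>" unfolding D_def by blast
      obtain v0 w0 where vw0: "v0 \<in> span A" "w0 \<in> span S" "u0 = v0 + w0" using Udec u0(1) by blast
      define s' where "s' = s - u0"
      have s'lb: "\<forall>u\<in>span (span A \<union> S). d \<le> N (s' - u)"
      proof
        fix u assume "u \<in> span (span A \<union> S)"
        then have "u0 + u \<in> U" using u0(1) U_def span_add by blast
        then have "d \<le> N (s - (u0 + u))" by (rule d_lb)
        then show "d \<le> N (s' - u)" by (simp add: s'_def diff_diff_eq)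
      qed
      have newcov: "\<forall>x\<in>X. \<exists>w\<in>span (S \<union> insert v0 T0). N (x - w) < \<epsilon>1"
      proof
        fix x assume x: "x \<in> X"
        with cov obtain w where w: "w \<in> span (insert s (S \<union> T0))" "N (x - w) < \<epsilon>" by auto
        then obtain c where c: "w - scale c s \<in> span (S \<union> T0)" using span_insert by blast
        define w1 where "w1 = w - scale c s"
        define u where "u = x - w1 - scale c u0"
        have uU: "u \<in> U"
        proof -
          have "x \<in> U" using x X AU by blast
          moreover have "w1 \<in> U" using c w1_def SU by blast
          moreover have "scale c u0 \<in> U" using u0(1) U_def span_scale by blast
          ultimately show ?thesis unfolding u_def U_def by (intro span_diff)
        qed
        have eq1: "x - w = - (scale c s' - u)"
          by (simp add: u_def w1_def s'_def scale_right_diff_distrib)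
        have "absK c * d \<le> N (scale c s' - u)"
          using scale_lb[OF s'lb] uU U_def by blast
        also have "\<dots> = N (x - w)" using eq1 N_minus[of "scale c s' - u"] by simp
        finally have cd: "absK c * d < \<epsilon>" using w(2) by simp
        have "N (scale c s') = absK c * N s'" by (rule N_scale)
        also have "\<dots> \<le> absK c * (d * \<epsilon>1 / \<epsilon>)"
          using u0(2) s'_def abs_nonneg by (intro mult_left_mono) auto
        also have "\<dots> = (absK c * d) * (\<epsilon>1 / \<epsilon>)" by simp
        also have "\<dots> < \<epsilon> * (\<epsilon>1 / \<epsilon>)"
          using cd e e1 by (intro mult_strict_right_mono) auto
        also have "\<dots> = \<epsilon>1" using e by simp
        finally have n2: "N (scale c s') < \<epsilon>1" .
        define w' where "w' = w1 + scale c v0 + scale c w0"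
        have w'in: "w' \<in> span (S \<union> insert v0 T0)"
        proof -
          have "w1 \<in> span (S \<union> insert v0 T0)"
            using c w1_def span_mono[of "S \<union> T0" "S \<union> insert v0 T0"] by blast
          moreover have "v0 \<in> span (S \<union> insert v0 T0)" by (auto intro: span_base)
          moreover have "w0 \<in> span (S \<union> insert v0 T0)"
            using vw0(2) span_mono[of S "S \<union> insert v0 T0"] by blast
          ultimately show ?thesis unfolding w'_def by (intro span_add span_scale)
        qed
        have eq2: "x - w' = (x - w) + scale c s'"
          by (simp add: w'_def w1_def s'_def vw0(3) scale_right_diff_distrib scale_right_distrib)
        have "N (x - w') < \<epsilon>1" using eq2 n2 w(2) e1 N_ultra_lt by (metis less_trans)
        with w'in show "\<exists>w\<in>span (S \<union> insert v0 T0). N (x - w) < \<epsilon>1" by blast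
      qed
      show ?thesis using IH[of "insert v0 T0" \<epsilon>1 \<delta>] T0 vw0(1) e e1 newcov by auto
    qed
  qed
qed


lemma baire:
  fixes M :: "nat \<Rightarrow> 'e set"
  assumes B: "banach_subset N V" and V0: "0 \<in> V" and cover: "\<forall>v\<in>V. \<exists>n. v \<in> M n"
  shows "\<exists>n y r. y \<in> V \<and> r > 0 \<and> (\<forall>z\<in>V. N (z - y) < r \<longrightarrow> (\<forall>e>0. \<exists>m\<in>M n. N (z - m) < e))"
proof (rule ccontr)
  assume H: "\<not> ?thesis"
  have "\<forall>n y r. \<exists>z e. y \<in> V \<longrightarrow> r > 0 \<longrightarrow>
      (z \<in> V \<and> N (z - y) < r \<and> e > 0 \<and> (\<forall>m\<in>M n. e \<le> N (z - m)))"
  proof (intro allI)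
    fix n y r
    show "\<exists>z e. y \<in> V \<longrightarrow> r > 0 \<longrightarrow>
      (z \<in> V \<and> N (z - y) < r \<and> e > 0 \<and> (\<forall>m\<in>M n. e \<le> N (z - m)))"
    proof (cases "y \<in> V \<and> r > 0")
      case True
      with H obtain z where z: "z \<in> V" "N (z - y) < r" "\<not> (\<forall>e>0. \<exists>m\<in>M n. N (z - m) < e)"
        by blast
      then obtain e where "e > 0" "\<forall>m\<in>M n. e \<le> N (z - m)" by (meson not_le)
      with z show ?thesis by blast
    qed blast
  qed
  then obtain Z D where ZD: "\<And>n y r. y \<in> V \<Longrightarrow> r > 0 \<Longrightarrow>
      Z n y r \<in> V \<and> N (Z n y r - y) < r \<and> D n y r > 0 \<and> (\<forall>m\<in>M n. D n y r \<le> N (Z n y r - m))"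
    by metis
  define seq where "seq = rec_nat (0::'e, 1::real)
     (\<lambda>k p. (Z k (fst p) (snd p), min (D k (fst p) (snd p)) (snd p / 2)))"
  define z where "z k = fst (seq k)" for k
  define \<rho> where "\<rho> k = snd (seq k)" for k
  have z0: "z 0 = 0" "\<rho> 0 = 1" by (simp_all add: z_def \<rho>_def seq_def)
  have zS: "z (Suc k) = Z k (z k) (\<rho> k)" "\<rho> (Suc k) = min (D k (z k) (\<rho> k)) (\<rho> k / 2)" for k
    by (simp_all add: z_def \<rho>_def seq_def)
  have inv: "z k \<in> V \<and> \<rho> k > 0" for k
  proof (induction k)
    case 0 then show ?case using z0 V0 by simp
  next
    case (Suc k) then show ?case using ZD[of "z k" "\<rho> k" k] zS by simp
  qed
  have step: "N (z (Suc k) - z k) < \<rho> k" "\<rho> (Suc k) \<le> \<rho> k / 2"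
    "\<forall>m\<in>M k. \<rho> (Suc k) \<le> N (z (Suc k) - m)" for k
  proof -
    have Zk: "Z k (z k) (\<rho> k) \<in> V \<and> N (Z k (z k) (\<rho> k) - z k) < \<rho> k \<and> D k (z k) (\<rho> k) > 0 \<and>
        (\<forall>m\<in>M k. D k (z k) (\<rho> k) \<le> N (Z k (z k) (\<rho> k) - m))"
      using ZD inv by blast
    then show "N (z (Suc k) - z k) < \<rho> k" using zS by simp
    show "\<rho> (Suc k) \<le> \<rho> k / 2" using zS by simp
    show "\<forall>m\<in>M k. \<rho> (Suc k) \<le> N (z (Suc k) - m)" using Zk zS by force
  qed
  have dec: "\<rho> (k + j) \<le> \<rho> k" for k j
  proof (induction j)
    case (Suc j) then show ?case using step(2)[of "k + j"] inv[of "k + j"] by simp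
  qed simp
  have small: "\<rho> k \<le> (1/2) ^ k" for k
  proof (induction k)
    case 0 then show ?case using z0 by simp
  next
    case (Suc k) then show ?case using step(2)[of k] by simp
  qed
  have dist: "N (z (k + j) - z k) < \<rho> k" for k j
  proof (induction j)
    case 0 then show ?case using inv by simp
  next
    case (Suc j)
    have "N (z (Suc (k + j)) - z (k + j)) < \<rho> k" using step(1)[of "k + j"] dec[of k j] by simp
    with Suc show ?case using N_diff_lt by simp
  qed
  have dist2: "N (z n - z k) < \<rho> k" if "k \<le> n" for k n
    using dist[of k "n - k"] that by simp
  have "\<forall>e>0. \<exists>M. \<forall>m\<ge>M. \<forall>n\<ge>M. N (z m - z n) < e"
  proof (intro allI impI)
    fix e :: real assume e: "e > 0"
    obtain M where M: "(1/2) ^ M < e" using real_arch_pow_inv[OF e, of "1/2"] by auto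
    show "\<exists>M. \<forall>m\<ge>M. \<forall>n\<ge>M. N (z m - z n) < e"
    proof (intro exI allI impI)
      fix m n assume mn: "M \<le> m" "M \<le> n"
      have "N (z m - z M) < e" using dist2[OF mn(1)] small[of M] M by simp
      moreover have "N (z M - z n) < e" using dist2[OF mn(2)] small[of M] M N_commute[of "z M" "z n"] by simp
      ultimately show "N (z m - z n) < e" using N_diff_lt by blast
    qed
  qed
  with B inv obtain l where l: "l \<in> V" "\<forall>e>0. \<exists>M. \<forall>n\<ge>M. N (z n - l) < e"
    unfolding banach_subset_def by blast
  from cover l(1) obtain k where k: "l \<in> M k" by blast
  from l(2) inv[of "Suc k"] obtain M1 where M1: "\<forall>n\<ge>M1. N (z n - l) < \<rho> (Suc k)" by blast
  define n where "n = max M1 (Suc k)"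
  have "N (z (Suc k) - z n) < \<rho> (Suc k)" using dist2[of "Suc k" n] n_def N_commute[of "z (Suc k)" "z n"] by simp
  moreover have "N (z n - l) < \<rho> (Suc k)" using M1 n_def by simp
  ultimately have "N (z (Suc k) - l) < \<rho> (Suc k)" using N_diff_lt by blast
  with step(3)[of k] k show False by (meson not_le)
qed


lemma N_diff_lt2: "N a < e \<Longrightarrow> N b < e \<Longrightarrow> N (a - b) < e"
  using N_ultra[of a "- b"] N_minus[of b] by simp

lemma main_loc:
  assumes NT: "nontrivial_abs absK"
    and LC: "local_compactoid absK scale N A"
    and ID: "infinite_dimensional scale (span A)"
    and BS: "banach_subset N (span A)"
  shows False
proof -
  have AC: "abs_convex absK scale A" using LC unfolding local_compactoid_def by blast
  have A0: "0 \<in> A" and Aadd: "\<And>x y. x \<in> A \<Longrightarrow> y \<in> A \<Longrightarrow> x + y \<in> A"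
    and Asc: "\<And>a x. absK a \<le> 1 \<Longrightarrow> x \<in> A \<Longrightarrow> scale a x \<in> A"
    using AC unfolding abs_convex_def by blast+
  have Aneg: "- x \<in> A" if "x \<in> A" for x
    using Asc[of "-1" x] that abs_minus_one by simp
  have Adiff: "x - y \<in> A" if "x \<in> A" "y \<in> A" for x y
    using Aadd[OF that(1) Aneg[OF that(2)]] by simp
  obtain x0 where x0: "x0 \<noteq> 0" "absK x0 \<noteq> 1" using NT unfolding nontrivial_abs_def by blast
  define lam where "lam = (if absK x0 > 1 then x0 else inverse x0)"
  have lam: "absK lam > 1"
  proof (cases "absK x0 > 1")
    case True then show ?thesis by (simp add: lam_def)
  next
    case False
    then have "absK x0 < 1" "absK x0 > 0" using x0 abs_pos by (auto simp: not_less)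
    then show ?thesis using False by (simp add: lam_def abs_inverse one_less_inverse)
  qed
  have lam0: "lam \<noteq> 0" using lam by auto
  define p where "p = inverse lam"
  have p: "0 < absK p" "absK p < 1" using lam by (simp_all add: p_def abs_inverse inverse_less_1_iff)
  define M where "M n = {x. scale (inverse (lam ^ n)) x \<in> A}" for n
  have Mmono: "v \<in> M m" if "v \<in> M n" "n \<le> m" for v n m
  proof -
    have eq: "inverse (lam ^ m) = inverse (lam ^ (m - n)) * inverse (lam ^ n)"
      using that(2) by (metis le_add_diff_inverse2 power_add inverse_mult_distrib)
    have "1 \<le> absK lam ^ (m - n)" using lam by (simp add: one_le_power)
    then have "absK (inverse (lam ^ (m - n))) \<le> 1"
      by (simp add: abs_inverse abs_power inverse_le_1_iff)
    then have "scale (inverse (lam ^ (m - n))) (scale (inverse (lam ^ n)) v) \<in> A"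
      using that(1) M_def Asc by blast
    then show ?thesis using eq M_def by simp
  qed
  have cover: "\<forall>v\<in>span A. \<exists>n. v \<in> M n"
  proof
    fix v assume "v \<in> span A"
    then show "\<exists>n. v \<in> M n"
    proof (induction rule: span_induct_alt)
      case base then show ?case using A0 M_def by auto
    next
      case (step c x y)
      then obtain n where n: "y \<in> M n" by blast
      obtain k where k: "absK c < absK lam ^ k" using real_arch_pow[OF lam] by blast
      define m where "m = max n k"
      have ym: "y \<in> M m" using Mmono n m_def by simp
      have "absK lam ^ k \<le> absK lam ^ m" using lam m_def by (simp add: power_increasing)
      then have "absK c \<le> absK lam ^ m" using k by simp
      moreover have "absK (inverse (lam ^ m) * c) = absK c / absK lam ^ m"
        by (simp add: abs_mult abs_inverse abs_power divide_inverse mult.commute)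
      moreover have "absK lam ^ m > 0" using lam by simp
      ultimately have "absK (inverse (lam ^ m) * c) \<le> 1" by simp
      then have "scale (inverse (lam ^ m) * c) x \<in> A" using Asc step(1) by blast
      moreover have "scale (inverse (lam ^ m)) y \<in> A" using ym M_def by simp
      ultimately have "scale (inverse (lam ^ m)) (scale c x + y) \<in> A"
        using Aadd by (simp add: scale_right_distrib)
      then show ?case using M_def by blast
    qed
  qed
  obtain n y r where nyr: "y \<in> span A" "r > 0"
    "\<forall>z\<in>span A. N (z - y) < r \<longrightarrow> (\<forall>e>0. \<exists>m\<in>M n. N (z - m) < e)"
    using baire[OF BS span_zero cover] by blast
  have ln: "absK lam ^ n > 0" using lam by simp
  define r' where "r' = r / absK lam ^ n"
  have r'pos: "r' > 0" using nyr(2) ln r'_def by simp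
  have clA: "\<forall>e>0. \<exists>a\<in>A. N (v - a) < e" if v: "v \<in> span A" "N v < r'" for v
  proof (intro allI impI)
    fix e :: real assume e: "e > 0"
    define z where "z = scale (lam ^ n) v"
    have zA: "z \<in> span A" using v z_def span_scale by blast
    have Nz: "N z < r"
    proof -
      have "N z = absK lam ^ n * N v" using z_def N_scale abs_power by simp
      also have "\<dots> < absK lam ^ n * r'" using v(2) ln by simp
      also have "\<dots> = r" using ln lam r'_def by simp
      finally show ?thesis .
    qed
    have e': "e * absK lam ^ n > 0" using e ln by simp
    have "y + z \<in> span A" using nyr(1) zA span_add by blast
    moreover have "N (y + z - y) < r" using Nz by simp
    ultimately obtain m1 where m1: "m1 \<in> M n" "N (y + z - m1) < e * absK lam ^ n"
      using nyr(3) e' by blast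
    have "N (y - y) < r" using nyr(2) by simp
    then obtain m2 where m2: "m2 \<in> M n" "N (y - m2) < e * absK lam ^ n"
      using nyr(3) nyr(1) e' by blast
    have eqz: "z - (m1 - m2) = (y + z - m1) - (y - m2)" by (simp add: algebra_simps)
    have Nzm: "N (z - (m1 - m2)) < e * absK lam ^ n"
      using eqz N_diff_lt2[OF m1(2) m2(2)] by metis
    define a where "a = scale (inverse (lam ^ n)) (m1 - m2)"
    have aA: "a \<in> A" using m1(1) m2(1) M_def Adiff a_def by (simp add: scale_right_diff_distrib)
    have "v - a = scale (inverse (lam ^ n)) (z - (m1 - m2))"
      using z_def a_def lam0 by (simp add: scale_right_diff_distrib)
    then have "N (v - a) = inverse (absK lam ^ n) * N (z - (m1 - m2))"
      using N_scale abs_inverse abs_power by simp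
    also have "\<dots> < inverse (absK lam ^ n) * (e * absK lam ^ n)"
      using Nzm ln by (intro mult_strict_left_mono) auto
    also have "\<dots> = e" using ln lam by simp
    finally show "\<exists>a\<in>A. N (v - a) < e" using aA by blast
  qed
  define \<epsilon> where "\<epsilon> = absK p * r' / 2"
  have epos: "\<epsilon> > 0" unfolding \<epsilon>_def using p r'pos by simp
  have "zero_nhd N {x. N x < \<epsilon>}" unfolding zero_nhd_def using epos by blast
  then obtain S where S: "finite S" "A \<subseteq> {u + s | u s. u \<in> {x. N x < \<epsilon>} \<and> s \<in> span S}"
    using LC unfolding local_compactoid_def by blast
  define X where "X = {x \<in> span A. N x < r'}"
  have covX: "\<forall>x\<in>X. \<exists>w\<in>span (S \<union> {}). N (x - w) < \<epsilon>"
  proof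
    fix x assume "x \<in> X"
    then obtain a where a: "a \<in> A" "N (x - a) < \<epsilon>" using clA epos X_def by blast
    then obtain u s where us: "a = u + s" "N u < \<epsilon>" "s \<in> span S" using S(2) by blast
    have "x - s = (x - a) + u" using us(1) by simp
    then have "N (x - s) < \<epsilon>" using a(2) us(2) N_ultra_lt by metis
    then show "\<exists>w\<in>span (S \<union> {}). N (x - w) < \<epsilon>" using us(3) by auto
  qed
  have cV: "closedP (span A)" using closedP_banach[OF BS] .
  have "\<epsilon> < absK p * r'" using epos \<epsilon>_def by simp
  then obtain T where T: "finite T" "T \<subseteq> span A" "\<forall>x\<in>X. \<exists>w\<in>span T. N (x - w) < absK p * r'"
    using transfer[OF cV _ S(1), of X, rule_format, of "{}" \<epsilon> "absK p * r'"] X_def covX epos by auto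
  have cT: "closedP (span T)" using closedP_union[OF T(1) closedP_empty] by simp
  have "span T = span A"
    using final[OF T(2) r'pos p cT] T(3) X_def by blast
  then show False using ID T(1,2) unfolding infinite_dimensional_def by blast
qed

end

theorem mainTheorem11:
  fixes absK :: "'k::field \<Rightarrow> real"
    and scale :: "'k \<Rightarrow> 'e::ab_group_add \<Rightarrow> 'e"
    and N :: "'e \<Rightarrow> real"
    and A :: "'e set"
  assumes "nonarch_valued_field absK"
    and "vector_space scale"
    and "nonarch_norm absK scale N"
    and "local_compactoid absK scale N A"
    and "infinite_dimensional scale (module.span scale A)"
  shows "\<not> banach_subset N (module.span scale A)"
proof
  assume BS: "banach_subset N (module.span scale A)"
  have "nv scale absK N"
    using assms unfolding nv_def nv_axioms_def nonarch_valued_field_def by blast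
  then show False
    using nv.main_loc[of scale absK N A] assms BS unfolding nonarch_valued_field_def by blast
qed

end
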